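(* Let $\alpha>0$, $g,h\in\mathbb{R}$ with $h>g$, $F_0\in(0,1)$, $X_0\in\mathbb{R}$, and define the quantile function $X:(0,1)\to\mathbb{R}$ by $$X(F)=X_0+\frac{1}{\alpha}\int_{F_0}^{F}\frac{d\xi}{\xi^g-\xi^h}.$$ Then: (i) if $g\geq 1$, $\lim_{F\to 0^+}X(F)=-\infty$ (infinite left tail); (ii) if $g<1$, $\lim_{F\to 0^+}X(F)$ is finite and equals $$X_0-\frac{F_0^{\lambda}}{\alpha\lambda}\left(1+\frac{\lambda F_0^{\gamma}}{\gamma}\,\Phi\!\left[F_0^{\gamma},1,1+\frac{\lambda}{\gamma}\right]\right),$$ where $\gamma=h-g$ and $\lambda=1-g$; (iii) for all such parameters, $\lim_{F\to 1^-}X(F)=+\infty$ (infinite right tail).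
   Context: Lerch's transcendent is $\Phi[z,s,v]=\sum_{n=0}^{\infty}\frac{z^n}{(v+n)^s}$ for $|z|<1$, $v\notin\{0,-1,-2,\dots\}$. The function $X(F)$ is the inverse of the S-distribution cumulative $F$ solving $dF/dX=\alpha(F^g-F^h)$, $F(X_0)=F_0$. *)

theory Defs
  imports "HOL-Analysis.Analysis"
begin

definition lerch_Phi :: "real \<Rightarrow> real \<Rightarrow> real \<Rightarrow> real" where
  "lerch_Phi z s v = (\<Sum>n. z ^ n / (v + real n) powr s)"

definition S_quantile :: "real \<Rightarrow> real \<Rightarrow> real \<Rightarrow> real \<Rightarrow> real \<Rightarrow> real \<Rightarrow> real" where
  "S_quantile \<alpha> g h F0 X0 F =
     X0 + (1 / \<alpha>) * (LBINT \<xi>=ereal F0..ereal F. 1 / (\<xi> powr g - \<xi> powr h))"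

end

theory Submission
  imports Defs "HOL-Real_Asymp.Real_Asymp"
begin

lemma powr_nat_mult: "0 < (y::real) \<Longrightarrow> y powr (real n * c) = (y powr c) ^ n"
  by (simp add: powr_powr[symmetric] powr_realpow[symmetric] mult.commute)

lemma den_pos: "0 < (x::real) \<Longrightarrow> x < 1 \<Longrightarrow> g < h \<Longrightarrow> 0 < x powr g - x powr h"
  using powr_less_mono'[of x g h] by simp

lemma cont_f: "0 < (a::real) \<Longrightarrow> b < 1 \<Longrightarrow> g < h \<Longrightarrow>
  continuous_on {a..b} (\<lambda>x. 1 / (x powr g - x powr h))"
  apply (intro continuous_intros)
  using den_pos[of _ g h] by (auto simp: less_imp_neq[symmetric])

lemma integrable_f: "0 < (a::real) \<Longrightarrow> b < 1 \<Longrightarrow> g < h \<Longrightarrow>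
  set_integrable lborel {a..b} (\<lambda>x. 1 / (x powr g - x powr h))"
  by (rule borel_integrable_atLeastAtMost'[OF cont_f])

lemma integral_powr:
  assumes "0 < (a::real)" "a \<le> b" "0 < e"
  shows "(LBINT x:{a..b}. x powr (e - 1)) = b powr e / e - a powr e / e"
proof -
  have "(LBINT x=a..b. x powr (e - 1)) = b powr e / e - a powr e / e"
    apply (rule interval_integral_FTC_finite)
    using assms
     apply (auto intro!: continuous_intros derivative_eq_intros
        simp: has_real_derivative_iff_has_vector_derivative[symmetric])
    done
  then show ?thesis using assms by (simp add: interval_integral_Icc)
qed

lemma e_powr:
  assumes "0 < (y::real)"
  shows "y powr ((1 - g) + real n * (h - g)) = y powr (1 - g) * (y powr (h - g)) ^ n"
  using assms by (simp add: powr_add powr_nat_mult)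

lemma ser_bound:
  fixes y g h :: real
  assumes "0 < y" "y < 1" "g < 1" "g < h"
  defines "e \<equiv> \<lambda>n::nat. (1 - g) + real n * (h - g)"
  shows "summable (\<lambda>n. y powr e n / e n)"
    and "0 \<le> (\<Sum>n. y powr e n / e n)"
    and "(\<Sum>n. y powr e n / e n) \<le> y powr (1 - g) / (1 - g) * (1 / (1 - y powr (h - g)))"
proof -
  have r0: "0 \<le> y powr (h - g)" by simp
  have r1: "y powr (h - g) < 1" using assms powr_less_mono'[of y 0 "h-g"] by simp
  have ge: "e n \<ge> 1 - g" for n unfolding e_def using assms by simp
  have epos: "0 < e n" for n using ge[of n] assms by linarith
  have bd: "y powr e n / e n \<le> y powr (1 - g) / (1 - g) * (y powr (h - g)) ^ n" for n
  proof -
    have "y powr e n / e n \<le> y powr e n / (1 - g)"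
      using ge[of n] assms epos[of n] by (intro divide_left_mono) (auto intro!: mult_pos_pos)
    also have "\<dots> = y powr (1 - g) / (1 - g) * (y powr (h - g)) ^ n"
      unfolding e_def using assms by (simp add: e_powr)
    finally show ?thesis .
  qed
  have sg: "summable (\<lambda>n. y powr (1 - g) / (1 - g) * (y powr (h - g)) ^ n)"
    using r0 r1 by (intro summable_mult summable_geometric) simp
  have nn: "0 \<le> y powr e n / e n" for n using epos[of n] by simp
  show s: "summable (\<lambda>n. y powr e n / e n)"
    by (rule summable_comparison_test'[OF sg]) (use nn bd epos in \<open>auto simp: less_imp_le\<close>)
  show "0 \<le> (\<Sum>n. y powr e n / e n)" by (rule suminf_nonneg[OF s nn])
  have "(\<Sum>n. y powr e n / e n) \<le> (\<Sum>n. y powr (1 - g) / (1 - g) * (y powr (h - g)) ^ n)"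
    by (rule suminf_le[OF bd s sg])
  also have "\<dots> = y powr (1 - g) / (1 - g) * (1 / (1 - y powr (h - g)))"
    using r0 r1 by (intro sums_unique[symmetric] sums_mult geometric_sums) auto
  finally show "(\<Sum>n. y powr e n / e n) \<le> y powr (1 - g) / (1 - g) * (1 / (1 - y powr (h - g)))" .
qed

lemma series_integral:
  fixes a b g h :: real
  assumes "0 < a" "a \<le> b" "b < 1" "g < 1" "g < h"
  defines "e \<equiv> \<lambda>n::nat. (1 - g) + real n * (h - g)"
  shows "(LBINT x:{a..b}. 1 / (x powr g - x powr h)) = (\<Sum>n. b powr e n / e n - a powr e n / e n)"
proof -
  define u where "u n x = indicator {a..b} x * x powr (e n - 1)" for n x
  have epos: "0 < e n" for n
  proof -
    have "0 \<le> real n * (h - g)" using assms by simp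
    then show ?thesis unfolding e_def using assms by linarith
  qed
  have int: "integrable lborel (u n)" for n
  proof -
    have "continuous_on {a..b} (\<lambda>x. x powr (e n - 1))"
      using assms by (intro continuous_intros) auto
    from borel_integrable_atLeastAtMost'[OF this] show ?thesis
      unfolding set_integrable_def u_def by simp
  qed
  have intval: "integral\<^sup>L lborel (u n) = b powr e n / e n - a powr e n / e n" for n
    using integral_powr[OF assms(1,2) epos[of n]]
    unfolding set_lebesgue_integral_def u_def by simp
  have pt: "(\<lambda>n. u n x) sums (indicator {a..b} x * (1 / (x powr g - x powr h)))" for x
  proof (cases "x \<in> {a..b}")
    case True
    then have x0: "0 < x" "x < 1" using assms by auto
    have r0: "0 \<le> x powr (h - g)" by simp
    have r1: "x powr (h - g) < 1" using x0 assms powr_less_mono'[of x 0 "h-g"] by simp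
    have un: "u n x = x powr (-g) * (x powr (h - g)) ^ n" for n
    proof -
      have "x powr (e n - 1) = x powr (-g + real n * (h - g))" unfolding e_def by (simp add: algebra_simps)
      also have "\<dots> = x powr (-g) * x powr (real n * (h - g))" by (rule powr_add)
      finally show ?thesis unfolding u_def using True x0 by (simp add: powr_nat_mult)
    qed
    have "(\<lambda>n. x powr (-g) * (x powr (h - g)) ^ n) sums (x powr (-g) * (1 / (1 - x powr (h - g))))"
      using r0 r1 by (intro sums_mult geometric_sums) auto
    moreover have "x powr (-g) * (1 / (1 - x powr (h - g))) = 1 / (x powr g - x powr h)"
    proof -
      have "x powr h = x powr g * x powr (h - g)" using x0 by (simp add: powr_add[symmetric])
      moreover have "x powr (-g) = 1 / x powr g" using x0 by (simp add: powr_minus divide_inverse)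
      moreover have "0 < x powr g" using x0 by simp
      ultimately show ?thesis using r1 by (simp add: field_simps)
    qed
    ultimately show ?thesis using True by (simp add: un)
  next
    case False
    then show ?thesis unfolding u_def by simp
  qed
  have nn: "0 \<le> u n x" for n x unfolding u_def by simp
  have sb: "summable (\<lambda>n. b powr e n / e n)" and sa: "summable (\<lambda>n. a powr e n / e n)"
    using ser_bound(1)[of b g h] ser_bound(1)[of a g h] assms unfolding e_def by auto
  have "(\<integral>x. (\<Sum>i. u i x) \<partial>lborel) = (\<Sum>i. integral\<^sup>L lborel (u i))"
  proof (rule integral_suminf)
    show "integrable lborel (u i)" for i by (rule int)
    show "AE x in lborel. summable (\<lambda>i. norm (u i x))"
      using pt nn by (auto simp: sums_iff)
    have "(\<integral>x. norm (u i x) \<partial>lborel) = b powr e i / e i - a powr e i / e i" for i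
      using nn intval by (simp)
    then show "summable (\<lambda>i. \<integral>x. norm (u i x) \<partial>lborel)"
      using summable_diff[OF sb sa] by simp
  qed
  moreover have "(\<lambda>x. \<Sum>i. u i x) = (\<lambda>x. indicator {a..b} x * (1 / (x powr g - x powr h)))"
    using pt by (auto simp: sums_iff)
  ultimately show ?thesis unfolding set_lebesgue_integral_def using intval by simp
qed

lemma X_eq_left:
  assumes "0 < F" "F \<le> F0"
  shows "S_quantile \<alpha> g h F0 X0 F = X0 - (1 / \<alpha>) * (LBINT x:{F..F0}. 1 / (x powr g - x powr h))"
  unfolding S_quantile_def
  by (subst interval_integral_endpoints_reverse) (use assms in \<open>simp add: interval_integral_Icc\<close>)

lemma X_eq_right:
  assumes "F0 \<le> F"
  shows "S_quantile \<alpha> g h F0 X0 F = X0 + (1 / \<alpha>) * (LBINT x:{F0..F}. 1 / (x powr g - x powr h))"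
  unfolding S_quantile_def using assms by (simp add: interval_integral_Icc)

lemma part_i:
  fixes \<alpha> g h F0 X0 :: real
  assumes "\<alpha> > 0" "h > g" "0 < F0" "F0 < 1" "g \<ge> 1"
  shows "filterlim (S_quantile \<alpha> g h F0 X0) at_bot (at_right 0)"
proof (rule filterlim_at_bot_mono)
  have c: "1 / \<alpha> > 0" using assms by simp
  show "filterlim (\<lambda>F. X0 - (1 / \<alpha>) * (ln F0 - ln F)) at_bot (at_right 0)"
    using c by real_asymp
  show "\<forall>\<^sub>F F in at_right 0. S_quantile \<alpha> g h F0 X0 F \<le> X0 - (1 / \<alpha>) * (ln F0 - ln F)"
    using eventually_at_right_real[OF assms(3)]
  proof (rule eventually_mono)
    fix F assume F: "F \<in> {0<..<F0}"
    have "(LBINT x:{F..F0}. 1 / x) \<le> (LBINT x:{F..F0}. 1 / (x powr g - x powr h))"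
    proof (rule set_integral_mono)
      show "set_integrable lborel {F..F0} (\<lambda>x. 1 / (x powr g - x powr h))"
        using F assms by (intro integrable_f) auto
      show "set_integrable lborel {F..F0} (\<lambda>x. 1 / x)"
        using F by (intro borel_integrable_atLeastAtMost' continuous_intros) auto
      fix x assume x: "x \<in> {F..F0}"
      then have x0: "0 < x" "x < 1" using F assms by auto
      have d: "0 < x powr g - x powr h" by (rule den_pos) (use x0 assms in auto)
      have p1: "x powr g \<le> x" using powr_mono'[of 1 g x] x0 assms by simp
      have p2: "0 \<le> x powr h" by simp
      have "x powr g - x powr h \<le> x" using p1 p2 by linarith
      then show "1 / x \<le> 1 / (x powr g - x powr h)" using d by (intro divide_left_mono) auto
    qed
    moreover have "(LBINT x:{F..F0}. 1 / x) = ln F0 - ln F"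
    proof -
      have "(LBINT x=F..F0. 1 / x) = ln F0 - ln F"
        apply (rule interval_integral_FTC_finite)
        using F
         apply (auto intro!: continuous_intros derivative_eq_intros
            simp: has_real_derivative_iff_has_vector_derivative[symmetric])
        done
      then show ?thesis using F by (simp add: interval_integral_Icc)
    qed
    ultimately show "S_quantile \<alpha> g h F0 X0 F \<le> X0 - (1 / \<alpha>) * (ln F0 - ln F)"
      using F c X_eq_left[of F F0 \<alpha> g h X0] by (auto intro!: divide_right_mono)
  qed
qed

lemma den_upper:
  fixes x g h F0 :: real
  assumes "0 < F0" "F0 \<le> x" "x < 1" "g < h"
  shows "x powr g - x powr h \<le> (F0 powr g + 1) * (h - g) / F0 * (1 - x)"
proof -
  have x0: "0 < x" using assms by linarith
  have split: "x powr g - x powr h = x powr g * (1 - x powr (h - g))"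
    using x0 by (simp add: powr_add[symmetric] algebra_simps)
  have "1 + (h - g) * ln x \<le> exp ((h - g) * ln x)" by (rule exp_ge_add_one_self)
  moreover have "x powr (h - g) = exp ((h - g) * ln x)" using x0 by (simp add: powr_def)
  ultimately have a1: "1 - x powr (h - g) \<le> (h - g) * (- ln x)" by linarith
  have "ln (1 / x) \<le> 1 / x - 1" using x0 by (intro ln_le_minus_one) auto
  then have "- ln x \<le> (1 - x) / x" using x0 by (simp add: ln_div field_simps)
  also have "\<dots> \<le> (1 - x) / F0" using assms x0 by (intro divide_left_mono) auto
  finally have a2: "- ln x \<le> (1 - x) / F0" .
  have b1: "1 - x powr (h - g) \<le> (h - g) * ((1 - x) / F0)"
    using a1 a2 assms by (smt (verit) mult_left_mono)
  have b0: "0 \<le> 1 - x powr (h - g)"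
    using x0 assms powr_less_mono'[of x 0 "h-g"] by simp
  have c1: "x powr g \<le> F0 powr g + 1"
  proof (cases "g \<ge> 0")
    case True
    have q1: "x powr g \<le> 1" using x0 assms True by (intro powr_le1) auto
    have q2: "0 \<le> F0 powr g" by simp
    show ?thesis using q1 q2 by linarith
  next
    case False
    then have "x powr g \<le> F0 powr g" using x0 assms by (intro powr_mono2') auto
    then show ?thesis by simp
  qed
  have "x powr g * (1 - x powr (h - g)) \<le> (F0 powr g + 1) * ((h - g) * ((1 - x) / F0))"
    using b0 b1 c1 by (intro mult_mono) auto
  then show ?thesis unfolding split by (simp add: field_simps)
qed

lemma part_iii:
  fixes \<alpha> g h F0 X0 :: real
  assumes "\<alpha> > 0" "h > g" "0 < F0" "F0 < 1"
  shows "filterlim (S_quantile \<alpha> g h F0 X0) at_top (at_left 1)"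
proof (rule filterlim_at_top_mono)
  define c where "c = F0 / ((F0 powr g + 1) * (h - g))"
  have c: "c / \<alpha> > 0" using assms unfolding c_def by (simp add: add_pos_nonneg)
  show "filterlim (\<lambda>F. X0 + (c / \<alpha>) * (ln (1 - F0) - ln (1 - F))) at_top (at_left 1)"
    using c by real_asymp
  show "\<forall>\<^sub>F F in at_left 1. X0 + (c / \<alpha>) * (ln (1 - F0) - ln (1 - F)) \<le> S_quantile \<alpha> g h F0 X0 F"
    using eventually_at_left_real[OF assms(4)]
  proof (rule eventually_mono)
    fix F assume F: "F \<in> {F0<..<1}"
    have "(LBINT x:{F0..F}. c / (1 - x)) \<le> (LBINT x:{F0..F}. 1 / (x powr g - x powr h))"
    proof (rule set_integral_mono)
      show "set_integrable lborel {F0..F} (\<lambda>x. 1 / (x powr g - x powr h))"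
        using F assms by (intro integrable_f) auto
      show "set_integrable lborel {F0..F} (\<lambda>x. c / (1 - x))"
        using F by (intro borel_integrable_atLeastAtMost' continuous_intros) auto
      fix x assume x: "x \<in> {F0..F}"
      then have x0: "0 < x" "x < 1" "F0 \<le> x" using F assms by auto
      have d: "0 < x powr g - x powr h" by (rule den_pos) (use x0 assms in auto)
      have u: "x powr g - x powr h \<le> (F0 powr g + 1) * (h - g) / F0 * (1 - x)"
        by (rule den_upper) (use x0 assms in auto)
      have bp: "0 < (F0 powr g + 1) * (h - g) / F0 * (1 - x)"
        using assms x0 by (intro mult_pos_pos divide_pos_pos add_pos_nonneg) auto
      have "c / (1 - x) = 1 / ((F0 powr g + 1) * (h - g) / F0 * (1 - x))"
        unfolding c_def using assms x0 by (simp add: field_simps)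
      also have "\<dots> \<le> 1 / (x powr g - x powr h)"
        by (rule divide_left_mono[OF u]) (simp, rule mult_pos_pos[OF bp d])
      finally show "c / (1 - x) \<le> 1 / (x powr g - x powr h)" .
    qed
    moreover have "(LBINT x:{F0..F}. c / (1 - x)) = c * (ln (1 - F0) - ln (1 - F))"
    proof -
      have "(LBINT x=F0..F. c / (1 - x)) = (- c * ln (1 - F)) - (- c * ln (1 - F0))"
        apply (rule interval_integral_FTC_finite)
        using F
         apply (auto intro!: continuous_intros derivative_eq_intros
            simp: has_real_derivative_iff_has_vector_derivative[symmetric])
        done
      then show ?thesis using F by (simp add: interval_integral_Icc algebra_simps)
    qed
    ultimately show "X0 + (c / \<alpha>) * (ln (1 - F0) - ln (1 - F)) \<le> S_quantile \<alpha> g h F0 X0 F"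
      using F assms X_eq_right[of F0 F \<alpha> g h X0] by (auto intro!: divide_right_mono)
  qed
qed

lemma S_value:
  fixes g h F0 :: real
  assumes "h > g" "0 < F0" "F0 < 1" "g < 1"
  defines "e \<equiv> \<lambda>n::nat. (1 - g) + real n * (h - g)"
  shows "(\<Sum>n. F0 powr e n / e n) = F0 powr (1 - g) / (1 - g) *
     (1 + (1 - g) * F0 powr (h - g) / (h - g) * lerch_Phi (F0 powr (h - g)) 1 (1 + (1 - g) / (h - g)))"
proof -
  define p where "p = F0 powr (1 - g)"
  define z where "z = F0 powr (h - g)"
  define v where "v = 1 + (1 - g) / (h - g)"
  define C where "C = p / (1 - g) * ((1 - g) * z / (h - g))"
  define t where "t = (\<lambda>n. F0 powr e n / e n)" 
  have v1: "v \<ge> 1" unfolding v_def using assms by simp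
  have z0: "0 \<le> z" and z1: "z < 1"
    unfolding z_def using assms powr_less_mono'[of F0 0 "h-g"] by auto
  have st: "summable t" unfolding t_def e_def using ser_bound(1)[of F0 g h] assms by simp
  have tS: "t (Suc n) = C * (z ^ n / (v + real n) powr 1)" for n
  proof -
    have "F0 powr e (Suc n) = p * z ^ Suc n"
      unfolding e_def p_def z_def by (rule e_powr) (use assms in auto)
    then have "t (Suc n) = p * z ^ Suc n / e (Suc n)"
      unfolding t_def by simp
    also have "e (Suc n) = (h - g) * (v + real n)"
      unfolding e_def v_def using assms by (simp add: field_simps)
    finally have tt: "t (Suc n) = p * z ^ Suc n / ((h - g) * (v + real n))" .
    have Ceq: "C = p * z / (h - g)"
    proof -
      have "1 - g \<noteq> 0" using assms by simp
      then show ?thesis unfolding C_def by simp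
    qed
    have "0 < v + real n" using v1 by simp
    then have "C * (z ^ n / (v + real n) powr 1) = p * z / (h - g) * (z ^ n / (v + real n))"
      using Ceq by simp
    also have "\<dots> = p * z ^ Suc n / ((h - g) * (v + real n))"
      by (simp only: times_divide_times_eq power_Suc mult.assoc)
    finally show ?thesis using tt by simp
  qed
  have t0: "t 0 = p / (1 - g)" unfolding t_def e_def p_def by simp
  have sphi: "summable (\<lambda>n. z ^ n / (v + real n) powr 1)"
  proof (rule summable_comparison_test'[of "\<lambda>n. z ^ n"])
    show "summable (\<lambda>n. z ^ n)" using z0 z1 by (intro summable_geometric) auto
    fix n
    have "z ^ n * 1 \<le> z ^ n * (v + real n)" using v1 z0 by (intro mult_left_mono) auto
    then have "z ^ n / (v + real n) \<le> z ^ n" using v1 by (simp add: divide_le_eq)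
    then show "norm (z ^ n / (v + real n) powr 1) \<le> z ^ n" using v1 z0 by simp
  qed
  have "(\<Sum>n. t (Suc n)) = C * lerch_Phi z 1 v"
    unfolding tS lerch_Phi_def by (rule suminf_mult[OF sphi])
  then have "suminf t = p / (1 - g) + C * lerch_Phi z 1 v"
    using suminf_split_head[OF st] t0 by simp
  then have key: "suminf t = p / (1 - g) * (1 + (1 - g) * z / (h - g) * lerch_Phi z 1 v)"
    unfolding C_def by (simp only: distrib_left mult_1_right mult.assoc)
  show ?thesis using key unfolding t_def p_def z_def v_def .
qed

lemma part_ii:
  fixes \<alpha> g h F0 X0 :: real
  assumes "\<alpha> > 0" "h > g" "0 < F0" "F0 < 1" "g < 1"
  shows "(S_quantile \<alpha> g h F0 X0 \<longlongrightarrow> X0 - F0 powr (1 - g) / (\<alpha> * (1 - g)) *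
     (1 + (1 - g) * F0 powr (h - g) / (h - g) * lerch_Phi (F0 powr (h - g)) 1 (1 + (1 - g) / (h - g))))
     (at_right 0)"
proof -
  define e where "e = (\<lambda>n::nat. (1 - g) + real n * (h - g))"
  define S where "S = (\<Sum>n. F0 powr e n / e n)"
  define T where "T F = (\<Sum>n. F powr e n / e n)" for F
  have Sv: "S = F0 powr (1 - g) / (1 - g) *
     (1 + (1 - g) * F0 powr (h - g) / (h - g) * lerch_Phi (F0 powr (h - g)) 1 (1 + (1 - g) / (h - g)))"
    unfolding S_def e_def using S_value[OF assms(2-5)] by simp
  have ev: "\<forall>\<^sub>F F in at_right 0. X0 - (1 / \<alpha>) * (S - T F) = S_quantile \<alpha> g h F0 X0 F"
    using eventually_at_right_real[OF assms(3)]
  proof (rule eventually_mono)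
    fix F assume F: "F \<in> {0<..<F0}"
    have s1: "summable (\<lambda>n. F0 powr e n / e n)" and s2: "summable (\<lambda>n. F powr e n / e n)"
      unfolding e_def using ser_bound(1)[of F0 g h] ser_bound(1)[of F g h] assms F by auto
    have "S_quantile \<alpha> g h F0 X0 F = X0 - (1 / \<alpha>) * (\<Sum>n. F0 powr e n / e n - F powr e n / e n)"
      using X_eq_left[of F F0 \<alpha> g h X0] series_integral[of F F0 g h] F assms
      unfolding e_def by simp
    also have "(\<Sum>n. F0 powr e n / e n - F powr e n / e n) = S - T F"
      unfolding S_def T_def using suminf_diff[OF s1 s2] by simp
    finally show "X0 - (1 / \<alpha>) * (S - T F) = S_quantile \<alpha> g h F0 X0 F" by simp
  qed
  have T0: "(T \<longlongrightarrow> 0) (at_right 0)"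
  proof (rule tendsto_sandwich[of "\<lambda>_. 0" _ _ "\<lambda>F. F powr (1 - g) / (1 - g) * (1 / (1 - F powr (h - g)))"])
    show "\<forall>\<^sub>F F in at_right 0. 0 \<le> T F"
      using eventually_at_right_real[OF zero_less_one]
      by eventually_elim (use assms in \<open>auto simp: T_def e_def intro: ser_bound(2)\<close>)
    show "\<forall>\<^sub>F F in at_right 0. T F \<le> F powr (1 - g) / (1 - g) * (1 / (1 - F powr (h - g)))"
      using eventually_at_right_real[OF zero_less_one]
    proof (rule eventually_mono)
      fix F :: real assume "F \<in> {0<..<1}"
      then show "T F \<le> F powr (1 - g) / (1 - g) * (1 / (1 - F powr (h - g)))"
        using ser_bound(3)[of F g h] assms unfolding T_def e_def by simp
    qed
    show "((\<lambda>_. 0::real) \<longlongrightarrow> 0) (at_right 0)" by simp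
    have l: "1 - g > 0" "h - g > 0" using assms by auto
    show "((\<lambda>F. F powr (1 - g) / (1 - g) * (1 / (1 - F powr (h - g)))) \<longlongrightarrow> 0) (at_right 0)"
      using l by real_asymp
  qed
  have "((\<lambda>F. X0 - (1 / \<alpha>) * (S - T F)) \<longlongrightarrow> X0 - (1 / \<alpha>) * (S - 0)) (at_right 0)"
    by (intro tendsto_intros T0)
  then have "(S_quantile \<alpha> g h F0 X0 \<longlongrightarrow> X0 - (1 / \<alpha>) * S) (at_right 0)"
    using tendsto_cong[OF ev] by simp
  moreover have "X0 - (1 / \<alpha>) * S = X0 - F0 powr (1 - g) / (\<alpha> * (1 - g)) *
     (1 + (1 - g) * F0 powr (h - g) / (h - g) * lerch_Phi (F0 powr (h - g)) 1 (1 + (1 - g) / (h - g)))"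
    unfolding Sv by simp
  ultimately show ?thesis by simp
qed

theorem mainTheorem4:
  fixes \<alpha> g h F0 X0 :: real
  assumes "\<alpha> > 0" and "h > g" and "0 < F0" and "F0 < 1"
  defines "X \<equiv> S_quantile \<alpha> g h F0 X0"
  defines "gam \<equiv> h - g"
  defines "lam \<equiv> 1 - g"
  shows "(g \<ge> 1 \<longrightarrow> filterlim X at_bot (at_right 0))
       \<and> (g < 1 \<longrightarrow> (X \<longlongrightarrow>
            X0 - F0 powr lam / (\<alpha> * lam) *
              (1 + lam * F0 powr gam / gam * lerch_Phi (F0 powr gam) 1 (1 + lam / gam)))
            (at_right 0))
       \<and> filterlim X at_top (at_left 1)"
  unfolding X_def gam_def lam_def
  using part_i[OF assms(1-4)] part_ii[OF assms(1-4)] part_iii[OF assms(1-4)]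
  by blast

end
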